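(* Let $C: y^2=a_0x^5+a_1x^4+\cdots+a_5$ be a hyperelliptic curve of genus 2. Let $P_1=(x_1,y_1),P_2=(x_2,y_2),Q_1=(x_3,y_3),Q_2=(x_4,y_4)$ be finite points of $C$ with $x_1,\dots,x_4$ pairwise distinct. Represent $J_1=P_1+P_2-2\infty$ by its Mumford pair $(x^2+\alpha_1x+\beta_1,\ \gamma_1x+\delta_1)$ and $J_2=Q_1+Q_2-2\infty$ by $(x^2+\alpha_2x+\beta_2,\ \gamma_2x+\delta_2)$. Define $N$ and $b_0,b_1,b_2,b_3$ by $N=(\beta_1-\beta_2)^2+(\alpha_1-\alpha_2)(\alpha_1\beta_2-\alpha_2\beta_1)$, $b_0=\tfrac1N((\beta_2-\beta_1)(\gamma_1-\gamma_2)+(\alpha_1-\alpha_2)(\delta_1-\delta_2))$, $b_1=\tfrac1N((\alpha_2\beta_2-\alpha_1\beta_1)(\gamma_1-\gamma_2)+(\alpha_1^2-\alpha_2^2-\beta_1+\beta_2)(\delta_1-\delta_2))$, $b_2=\tfrac1N(\alpha_2^2\beta_1\gamma_1+\alpha_1^2\beta_2\gamma_2-\alpha_1\alpha_2(\beta_1\gamma_1+\beta_2\gamma_2)+(\beta_1-\beta_2)(\beta_1\gamma_2-\beta_2\gamma_1)+(\alpha_1\alpha_2(\alpha_1-\alpha_2)+(\alpha_1\beta_2-\alpha_2\beta_1))(\delta_1-\delta_2))$, $b_3=\tfrac1N((\alpha_2-\alpha_1)\beta_1\beta_2(\gamma_1-\gamma_2)+\alpha_1^2\beta_2\delta_1+\alpha_2^2\beta_1\delta_2-\alpha_1\alpha_2(\beta_2\delta_1+\beta_1\delta_2)+(\beta_1-\beta_2)(\beta_1\delta_2-\beta_2\delta_1))$.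 Assume $N\,b_0\,\beta_1\beta_2\ne0$. Define $$\alpha_3=-\alpha_1-\alpha_2-\frac{a_0-2b_0b_1}{b_0^2},\quad \beta_3=\frac{b_3^2-a_5}{b_0^2\beta_1\beta_2},\quad \gamma_3=-b_2+b_1\alpha_3-b_0\alpha_3^2+b_0\beta_3,\quad \delta_3=-b_0\alpha_3\beta_3+b_1\beta_3-b_3,$$ and let $x_5,x_6$ be the roots (with multiplicity) of $x^2+\alpha_3x+\beta_3$. Then $(x_5,\gamma_3x_5+\delta_3)$ and $(x_6,\gamma_3x_6+\delta_3)$ lie on $C$ and $$J_1+J_2\sim (x_5,\gamma_3x_5+\delta_3)+(x_6,\gamma_3x_6+\delta_3)-2\infty,$$ i.e. the sum $J_1+J_2$ has Mumford pair $(x^2+\alpha_3x+\beta_3,\ \gamma_3x+\delta_3)$.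
   Context: $C=\{(x,y)\in\mathbb{C}^2:y^2=p(x)\}\cup\{\infty\}$ where $p(x)=a_0x^5+\cdots+a_5$, $a_0\ne0$, has no repeated roots; $\infty$ is the single point at infinity. $\sim$ denotes linear equivalence of divisors (equality in $\mathrm{Jac}(C)$). Mumford pair: for finite points $(u_1,v_1),(u_2,v_2)$ of $C$ with $u_1\ne u_2$, the divisor $(u_1,v_1)+(u_2,v_2)-2\infty$ is represented by $(A(x),B(x))$ with $A(x)=(x-u_1)(x-u_2)=x^2+\alpha x+\beta$ and $B(x)=\gamma x+\delta$ the linear polynomial with $B(u_i)=v_i$; for a double point $2(u_1,v_1)-2\infty$ one takes $A=(x-u_1)^2$ and $B(x)=\frac{p'(u_1)}{2v_1}(x-u_1)+v_1$. *)

theory Defs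
  imports "HOL-Complex_Analysis.Complex_Analysis" "HOL-Computational_Algebra.Polynomial"
begin

text \<open>Points of the (smooth projective model of the) genus-2 curve y^2 = p(x), deg p = 5:
  the single point at infinity, or a finite point (x,y).\<close>
datatype cpt = Inf | Fin complex complex

definition on_curve :: "complex poly \<Rightarrow> cpt \<Rightarrow> bool" where
  "on_curve p P = (case P of Inf \<Rightarrow> True | Fin u v \<Rightarrow> v^2 = poly p u)"

text \<open>Elements of the function field C(x)[y]/(y^2 - p): f = r1/r2 + (s1/s2) y,
  represented by four polynomials (r1, r2, s1, s2).\<close>
type_synonym ffun = "complex poly \<times> complex poly \<times> complex poly \<times> complex poly"

definition ff_eval :: "ffun \<Rightarrow> complex \<Rightarrow> complex \<Rightarrow> complex" where
  "ff_eval F x y = (case F of (r1, r2, s1, s2) \<Rightarrow> poly r1 x / poly r2 x + poly s1 x / poly s2 x * y)"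

text \<open>Nonzero element of the function field (1 and y are independent over C(x)).\<close>
definition ff_valid :: "ffun \<Rightarrow> bool" where
  "ff_valid F = (case F of (r1, r2, s1, s2) \<Rightarrow> r2 \<noteq> 0 \<and> s2 \<noteq> 0 \<and> (r1 \<noteq> 0 \<or> s1 \<noteq> 0))"

text \<open>g is the expression of F in a local parameter t at the point P (t = 0 corresponds to P):
  at a non-branch finite point (u,v): x = u + t, y = Y(t) with Y(0) = v;
  at a branch point (u,0): x = u + t^2, y = Y(t);
  at infinity: x = 1/t^2, y = Y(t)/t^5 with Y holomorphic.\<close>
definition local_expr :: "complex poly \<Rightarrow> cpt \<Rightarrow> ffun \<Rightarrow> (complex \<Rightarrow> complex) \<Rightarrow> bool" where
  "local_expr p P F g \<longleftrightarrow> (\<exists>e Y. e > 0 \<and> Y holomorphic_on ball 0 e \<and>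
     (case P of
        Fin u v \<Rightarrow>
          (if v \<noteq> 0 then Y 0 = v \<and> (\<forall>t\<in>ball 0 e. (Y t)^2 = poly p (u + t))
                  \<and> (\<forall>t\<in>ball 0 e - {0}. g t = ff_eval F (u + t) (Y t))
           else (\<forall>t\<in>ball 0 e. (Y t)^2 = poly p (u + t^2))
                  \<and> (\<forall>t\<in>ball 0 e - {0}. g t = ff_eval F (u + t^2) (Y t)))
      | Inf \<Rightarrow> (\<forall>t\<in>ball 0 e - {0}. (Y t)^2 = t^10 * poly p (1 / t^2)
                  \<and> g t = ff_eval F (1 / t^2) (Y t / t^5))))"

definition ff_ord :: "complex poly \<Rightarrow> ffun \<Rightarrow> cpt \<Rightarrow> int" where
  "ff_ord p F P = (SOME n. \<exists>g. local_expr p P F g \<and> zorder g 0 = n)"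

type_synonym cdivisor = "cpt \<Rightarrow> int"

definition ff_div :: "complex poly \<Rightarrow> ffun \<Rightarrow> cdivisor" where
  "ff_div p F = (\<lambda>P. if on_curve p P then ff_ord p F P else 0)"

definition lin_equiv :: "complex poly \<Rightarrow> cdivisor \<Rightarrow> cdivisor \<Rightarrow> bool" where
  "lin_equiv p D1 D2 \<longleftrightarrow> (\<exists>F. ff_valid F \<and> (\<forall>P. D1 P - D2 P = ff_div p F P))"

definition pt_div :: "cpt \<Rightarrow> cdivisor" where
  "pt_div P = (\<lambda>Q. if Q = P then 1 else 0)"

definition two_pt_div :: "cpt \<Rightarrow> cpt \<Rightarrow> cdivisor" where
  "two_pt_div P Q = (\<lambda>R. pt_div P R + pt_div Q R - 2 * pt_div Inf R)"

end

theory Submission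
  imports Defs
begin


lemma zorder_quot:
  fixes g num den :: "complex \<Rightarrow> complex"
  assumes e: "e > 0" and hn: "num holomorphic_on ball 0 e" and hd: "den holomorphic_on ball 0 e"
    and n0: "num 0 \<noteq> 0" and d0: "den 0 \<noteq> 0"
    and eq: "\<And>t. t \<in> ball 0 e \<Longrightarrow> t \<noteq> 0 \<Longrightarrow> den t \<noteq> 0 \<Longrightarrow> g t = num t / den t * t powi n"
  shows "zorder g 0 = n"
proof -
  define S where "S = ball 0 e \<inter> den -` (-{0})"
  have "continuous_on (ball 0 e) den" using hd holomorphic_on_imp_continuous_on by blast
  then have "open (den -` (-{0}) \<inter> ball 0 e)" using continuous_on_open_vimage[of "ball 0 e" den] by auto
  then have oS: "open S" unfolding S_def by (simp add: Int_commute)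
  have 0: "0 \<in> S" using e d0 by (simp add: S_def)
  have h: "(\<lambda>t. num t / den t) holomorphic_on S"
    by (rule holomorphic_on_divide) (auto simp: S_def intro: holomorphic_on_subset[OF hn] holomorphic_on_subset[OF hd])
  show ?thesis
    by (rule zorder_eqI[OF oS 0 h]) (use n0 d0 eq in \<open>auto simp: S_def\<close>)
qed

lemma hol_sqrt:
  fixes f :: "complex \<Rightarrow> complex"
  assumes hf: "f holomorphic_on UNIV" and c: "c \<noteq> 0" and f0: "f 0 = c^2"
  shows "\<exists>e>0. \<exists>Y. Y holomorphic_on ball 0 e \<and> Y 0 = c \<and> (\<forall>t\<in>ball 0 e. (Y t)^2 = f t)"
proof -
  have "isCont f 0" using hf holomorphic_on_imp_continuous_on continuous_on_eq_continuous_at by blast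
  moreover have "norm (c^2) > 0" using c by simp
  ultimately obtain e where e: "e > 0" and he: "\<And>t. dist t 0 < e \<Longrightarrow> dist (f t) (f 0) < norm (c^2)"
    unfolding continuous_at_eps_delta by blast
  have nr: "f t / c^2 \<notin> \<real>\<^sub>\<le>\<^sub>0" if "t \<in> ball 0 e" for t
  proof -
    have "dist (f t) (c^2) < norm (c^2)" using he[of t] that f0 by (simp add: dist_commute)
    then have "norm (f t / c^2 - 1) < 1" using c
      by (simp add: dist_norm norm_divide divide_simps diff_divide_distrib[symmetric])
    then have "Re (f t / c^2) > 0"
      using complex_Re_le_cmod[of "1 - f t / c^2"] by (simp add: norm_minus_commute)
    then show ?thesis by (simp add: complex_nonpos_Reals_iff)
  qed
  define Y where "Y = (\<lambda>t. c * csqrt (f t / c^2))"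
  have "Y holomorphic_on ball 0 e" unfolding Y_def
    by (intro holomorphic_intros holomorphic_on_csqrt' holomorphic_on_subset[OF hf]) (use nr in auto)
  moreover have "Y 0 = c" using f0 c by (simp add: Y_def)
  moreover have "\<forall>t\<in>ball 0 e. (Y t)^2 = f t" using c by (simp add: Y_def power_mult_distrib)
  ultimately show ?thesis using e by blast
qed


lemma ff_ord_eqI:
  assumes "\<exists>g. local_expr p P F g" and "\<And>g. local_expr p P F g \<Longrightarrow> zorder g 0 = n"
  shows "ff_ord p F P = n"
  unfolding ff_ord_def
  by (rule some_equality) (use assms in auto)

lemma lin_pow: "poly ([:-u,1:]^d) (u + t) = (t::complex)^d"
  by (simp add: poly_power)

lemma exists_local_nb:
  assumes v: "v \<noteq> 0" and on: "v^2 = poly p u"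
  shows "\<exists>g. local_expr p (Fin u v) F g"
proof -
  have "(\<lambda>t. poly p (u + t)) holomorphic_on UNIV" by (intro holomorphic_intros)
  from hol_sqrt[OF this v] on obtain e Y where "e > 0" "Y holomorphic_on ball 0 e" "Y 0 = v"
    "\<forall>t\<in>ball 0 e. (Y t)^2 = poly p (u + t)" by auto
  then show ?thesis unfolding local_expr_def using v
    by (intro exI[of _ "\<lambda>t. ff_eval F (u + t) (Y t)"] exI[of _ e] exI[of _ Y]) auto
qed

lemma exists_local_br:
  assumes r: "rsquarefree p" and on: "poly p u = 0"
  shows "\<exists>g. local_expr p (Fin u 0) F g"
proof -
  have p0: "p \<noteq> 0" using r by (simp add: rsquarefree_def)
  have "order u p = 1" using rsquarefree_root_order[OF r on p0] .
  with order_decomp[OF p0, of u] obtain q where q: "p = [:-u,1:] * q" "\<not> [:-u,1:] dvd q" by auto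
  have qu: "poly q u \<noteq> 0" using q(2) by (simp add: poly_eq_0_iff_dvd)
  define c where "c = csqrt (poly q u)"
  have c0: "c \<noteq> 0" using qu by (simp add: c_def)
  have "(\<lambda>t. poly q (u + t^2)) holomorphic_on UNIV" by (intro holomorphic_intros)
  from hol_sqrt[OF this c0] obtain e Y where "e > 0" "Y holomorphic_on ball 0 e"
    "\<forall>t\<in>ball 0 e. (Y t)^2 = poly q (u + t^2)" by (auto simp: c_def)
  moreover have "(\<lambda>t. t * Y t) holomorphic_on ball 0 e" by (intro holomorphic_intros) fact
  moreover have "\<forall>t\<in>ball 0 e. (t * Y t)^2 = poly p (u + t^2)"
    using calculation(3) by (simp add: q(1) power_mult_distrib algebra_simps)
  ultimately show ?thesis unfolding local_expr_def
    by (intro exI[of _ "\<lambda>t. ff_eval F (u + t^2) (t * Y t)"] exI[of _ e] exI[of _ "\<lambda>t. t * Y t"]) auto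
qed

lemma exists_local_inf:
  assumes p: "p = [:a5, a4, a3, a2, a1, a0:]" and a0: "a0 \<noteq> 0"
  shows "\<exists>g. local_expr p Inf F g"
proof -
  define c where "c = csqrt a0"
  have c0: "c \<noteq> 0" using a0 by (simp add: c_def)
  define f where "f = (\<lambda>t::complex. a0 + a1 * t^2 + a2 * t^4 + a3 * t^6 + a4 * t^8 + a5 * t^10)"
  have "f holomorphic_on UNIV" unfolding f_def by (intro holomorphic_intros)
  from hol_sqrt[OF this c0] obtain e Y where "e > 0" "Y holomorphic_on ball 0 e"
    "\<forall>t\<in>ball 0 e. (Y t)^2 = f t" by (auto simp: c_def f_def)
  moreover have "\<forall>t\<in>ball 0 e - {0}. f t = t^10 * poly p (1 / t^2)"
    by (auto simp: f_def p field_simps)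
  ultimately show ?thesis unfolding local_expr_def
    by (intro exI[of _ "\<lambda>t. ff_eval F (1 / t^2) (Y t / t^5)"] exI[of _ e] exI[of _ Y]) auto
qed


lemma ff_eval_F: "ff_eval (-bp, A, 1, A) x y = (y - poly bp x) / poly A x"
  by (simp add: ff_eval_def diff_divide_distrib)

lemma ord_inf:
  assumes p: "p = [:a5, a4, a3, a2, a1, a0:]" and a0: "a0 \<noteq> 0"
    and bp: "bp = [:b3, b2, b1, b0:]" and b0: "b0 \<noteq> 0" and A: "A = [:\<beta>, \<alpha>, 1:]"
  shows "ff_ord p (-bp, A, 1, A) Inf = -2"
proof (rule ff_ord_eqI)
  show "\<exists>g. local_expr p Inf (-bp, A, 1, A) g" by (rule exists_local_inf[OF p a0])
next
  fix g assume "local_expr p Inf (-bp, A, 1, A) g"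
  then obtain e Y where e: "e > 0" and hY: "Y holomorphic_on ball 0 e"
    and gY: "\<And>t. t \<in> ball 0 e - {0} \<Longrightarrow> g t = ff_eval (-bp, A, 1, A) (1 / t^2) (Y t / t^5)"
    unfolding local_expr_def by auto
  define num where "num = (\<lambda>t. t * Y t - (b0 + b1 * t^2 + b2 * t^4 + b3 * t^6))"
  define den where "den = (\<lambda>t::complex. 1 + \<alpha> * t^2 + \<beta> * t^4)"
  show "zorder g 0 = -2"
  proof (rule zorder_quot[OF e, of num den])
    show "num holomorphic_on ball 0 e" unfolding num_def by (intro holomorphic_intros hY)
    show "den holomorphic_on ball 0 e" unfolding den_def by (intro holomorphic_intros)
    show "num 0 \<noteq> 0" using b0 by (simp add: num_def)
    show "den 0 \<noteq> 0" by (simp add: den_def)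
  next
    fix t :: complex assume t: "t \<in> ball 0 e" "t \<noteq> 0" "den t \<noteq> 0"
    have Ad: "poly A (1 / t^2) = den t / t^4" using t(2) by (simp add: A den_def field_simps)
    have bd: "poly bp (1 / t^2) = (b0 + b1 * t^2 + b2 * t^4 + b3 * t^6) / t^6"
      using t(2) by (simp add: bp field_simps)
    have "g t = (Y t / t^5 - poly bp (1 / t^2)) / poly A (1 / t^2)"
      using gY[of t] t by (simp add: ff_eval_F)
    also have "\<dots> = num t / den t * t powi (-2)"
      unfolding Ad bd num_def using t(2,3) by (simp add: power_int_minus field_simps) (simp add: eval_nat_numeral)
    finally show "g t = num t / den t * t powi (-2)" .
  qed
qed


lemma decomp_at:
  assumes "A \<noteq> 0"
  obtains R where "A = [:-u,1:]^order u A * R" "poly R u \<noteq> 0"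
proof -
  from order_decomp[OF assms, of u] obtain R where "A = [:-u,1:]^order u A * R" "\<not> [:-u,1:] dvd R" by auto
  then show ?thesis using that by (simp add: poly_eq_0_iff_dvd)
qed

lemma ord_nb:
  fixes p bp A E :: "complex poly"
  assumes v: "v \<noteq> 0" and on: "v^2 = poly p u"
    and A0: "A \<noteq> 0" and E0: "E \<noteq> 0" and c: "c \<noteq> 0"
    and H: "\<And>x. poly bp x ^2 - poly p x = c * poly E x"
  shows "ff_ord p (-bp, A, 1, A) (Fin u v) =
     (if v = poly bp u then int (order u E) - int (order u A) else - int (order u A))"
proof (rule ff_ord_eqI)
  show "\<exists>g. local_expr p (Fin u v) (-bp, A, 1, A) g" by (rule exists_local_nb[OF v on])
next
  fix g assume "local_expr p (Fin u v) (-bp, A, 1, A) g"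
  then obtain e Y where e: "e > 0" and hY: "Y holomorphic_on ball 0 e" and Y0: "Y 0 = v"
    and Ysq: "\<And>t. t \<in> ball 0 e \<Longrightarrow> (Y t)^2 = poly p (u + t)"
    and gY: "\<And>t. t \<in> ball 0 e - {0} \<Longrightarrow> g t = ff_eval (-bp, A, 1, A) (u + t) (Y t)"
    unfolding local_expr_def using v by auto
  obtain R where R: "A = [:-u,1:]^order u A * R" "poly R u \<noteq> 0" using decomp_at[OF A0] by blast
  define d where "d = order u A"
  have pA: "poly A (u + t) = t^d * poly R (u + t)" for t
    by (subst R(1)) (simp add: d_def poly_power)
  have gt: "g t = (Y t - poly bp (u + t)) / (t^d * poly R (u + t))" if "t \<in> ball 0 e" "t \<noteq> 0" for t
    using gY[of t] that by (simp add: ff_eval_F pA)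
  show "zorder g 0 = (if v = poly bp u then int (order u E) - int (order u A) else - int (order u A))"
  proof (cases "v = poly bp u")
    case True
    obtain Q where Q: "E = [:-u,1:]^order u E * Q" "poly Q u \<noteq> 0" using decomp_at[OF E0] by blast
    define m where "m = order u E"
    have pE: "poly E (u + t) = t^m * poly Q (u + t)" for t
      by (subst Q(1)) (simp add: m_def poly_power)
    define num where "num = (\<lambda>t. - c * poly Q (u + t))"
    define den where "den = (\<lambda>t. (Y t + poly bp (u + t)) * poly R (u + t))"
    have "zorder g 0 = int m - int d"
    proof (rule zorder_quot[OF e, of num den])
      show "num holomorphic_on ball 0 e" unfolding num_def by (intro holomorphic_intros)
      show "den holomorphic_on ball 0 e" unfolding den_def by (intro holomorphic_intros hY)
      show "num 0 \<noteq> 0" using c Q(2) by (simp add: num_def)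
      show "den 0 \<noteq> 0" using v R(2) True[symmetric] Y0 by (simp add: den_def)
    next
      fix t :: complex assume t: "t \<in> ball 0 e" "t \<noteq> 0" "den t \<noteq> 0"
      have yb: "Y t + poly bp (u + t) \<noteq> 0" "poly R (u + t) \<noteq> 0" using t(3) by (auto simp: den_def)
      have "(Y t - poly bp (u + t)) * (Y t + poly bp (u + t)) = - c * t^m * poly Q (u + t)"
        using H[of "u + t"] Ysq[OF t(1)] pE[of t]
        by (simp add: power2_eq_square algebra_simps)
      then have "Y t - poly bp (u + t) = - c * t^m * poly Q (u + t) / (Y t + poly bp (u + t))"
        using yb by (simp add: field_simps)
      then have "g t = (- c * t^m * poly Q (u + t) / (Y t + poly bp (u + t))) / (t^d * poly R (u + t))"
        using gt[OF t(1,2)] by simp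
      also have "\<dots> = num t / den t * (t^m / t^d)"
        by (simp add: num_def den_def mult_ac)
      also have "t^m / t^d = t powi (int m - int d)" using t(2) by (simp add: power_int_diff)
      finally show "g t = num t / den t * t powi (int m - int d)" .
    qed
    then show ?thesis using True by (simp add: m_def d_def)
  next
    case False
    define num where "num = (\<lambda>t. Y t - poly bp (u + t))"
    define den where "den = (\<lambda>t. poly R (u + t))"
    have "zorder g 0 = - int d"
    proof (rule zorder_quot[OF e, of num den])
      show "num holomorphic_on ball 0 e" unfolding num_def by (intro holomorphic_intros hY)
      show "den holomorphic_on ball 0 e" unfolding den_def by (intro holomorphic_intros)
      show "num 0 \<noteq> 0" using False Y0 by (simp add: num_def)
      show "den 0 \<noteq> 0" using R(2) by (simp add: den_def)
    next
      fix t :: complex assume t: "t \<in> ball 0 e" "t \<noteq> 0" "den t \<noteq> 0"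
      then show "g t = num t / den t * t powi (- int d)"
        using gt[OF t(1,2)] by (simp add: num_def den_def power_int_minus field_simps)
    qed
    then show ?thesis using False by (simp add: d_def)
  qed
qed


lemma ord_br:
  fixes p bp A :: "complex poly"
  assumes r: "rsquarefree p" and on: "poly p u = 0" and A0: "A \<noteq> 0"
  shows "ff_ord p (-bp, A, 1, A) (Fin u 0) =
     (if poly bp u = 0 then 1 - 2 * int (order u A) else - 2 * int (order u A))"
proof (rule ff_ord_eqI)
  show "\<exists>g. local_expr p (Fin u 0) (-bp, A, 1, A) g" by (rule exists_local_br[OF r on])
next
  fix g assume "local_expr p (Fin u 0) (-bp, A, 1, A) g"
  then obtain e Y where e: "e > 0" and hY: "Y holomorphic_on ball 0 e"
    and Ysq: "\<And>t. t \<in> ball 0 e \<Longrightarrow> (Y t)^2 = poly p (u + t^2)"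
    and gY: "\<And>t. t \<in> ball 0 e - {0} \<Longrightarrow> g t = ff_eval (-bp, A, 1, A) (u + t^2) (Y t)"
    unfolding local_expr_def by auto
  have Y0: "Y 0 = 0" using Ysq[of 0] e on by simp
  obtain R where R: "A = [:-u,1:]^order u A * R" "poly R u \<noteq> 0" using decomp_at[OF A0] by blast
  define d where "d = order u A"
  have pA: "poly A (u + t^2) = t^(2*d) * poly R (u + t^2)" for t
    by (subst R(1)) (simp add: d_def poly_power power_mult)
  have gt: "g t = (Y t - poly bp (u + t^2)) / (t^(2*d) * poly R (u + t^2))" if "t \<in> ball 0 e" "t \<noteq> 0" for t
    using gY[of t] that by (simp add: ff_eval_F pA)
  show "zorder g 0 = (if poly bp u = 0 then 1 - 2 * int (order u A) else - 2 * int (order u A))"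
  proof (cases "poly bp u = 0")
    case False
    define num where "num = (\<lambda>t. Y t - poly bp (u + t^2))"
    define den where "den = (\<lambda>t. poly R (u + t^2))"
    have "zorder g 0 = - int (2*d)"
    proof (rule zorder_quot[OF e, of num den])
      show "num holomorphic_on ball 0 e" unfolding num_def by (intro holomorphic_intros hY)
      show "den holomorphic_on ball 0 e" unfolding den_def by (intro holomorphic_intros)
      show "num 0 \<noteq> 0" using False Y0 by (simp add: num_def)
      show "den 0 \<noteq> 0" using R(2) by (simp add: den_def)
    next
      fix t :: complex assume t: "t \<in> ball 0 e" "t \<noteq> 0" "den t \<noteq> 0"
      have pw: "t powi (- int (2*d)) = inverse (t^(2*d))" by (simp only: power_int_minus power_int_of_nat)
      have "g t = num t / den t * inverse (t^(2*d))"
        using gt[OF t(1,2)] t by (simp add: num_def den_def field_simps)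
      then show "g t = num t / den t * t powi (- int (2*d))" unfolding pw .
    qed
    then show ?thesis using False by (simp add: d_def)
  next
    case True
    then obtain bq where bq: "bp = [:-u,1:] * bq" by (metis dvdE poly_eq_0_iff_dvd)
    have p0: "p \<noteq> 0" using r by (simp add: rsquarefree_def)
    have "order u p = 1" using rsquarefree_root_order[OF r on p0] .
    with order_decomp[OF p0, of u] obtain q where q: "p = [:-u,1:] * q" "\<not> [:-u,1:] dvd q" by auto
    have qu: "poly q u \<noteq> 0" using q(2) by (simp add: poly_eq_0_iff_dvd)
    define W where "W = (\<lambda>z. if z = 0 then deriv Y 0 else (Y z - Y 0) / (z - 0))"
    have hW: "W holomorphic_on ball 0 e" unfolding W_def
      by (rule pole_lemma[OF hY]) (use e in auto)
    have YW: "Y t = t * W t" for t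
      using Y0 by (cases "t = 0") (auto simp: W_def)
    have Wsq: "W t ^ 2 = poly q (u + t^2)" if "t \<in> ball 0 e" "t \<noteq> 0" for t
    proof -
      have "t^2 * W t ^ 2 = t^2 * poly q (u + t^2)"
        using Ysq[OF that(1)] by (simp add: YW q(1) power_mult_distrib algebra_simps)
      then show ?thesis using that(2) by simp
    qed
    have W0: "W 0 \<noteq> 0"
    proof -
      have "isCont W 0" using hW e holomorphic_on_imp_continuous_on
        by (metis centre_in_ball continuous_on_eq_continuous_at open_ball)
      then have l1: "((\<lambda>t. W t ^ 2) \<longlongrightarrow> W 0 ^ 2) (at 0)"
        by (intro tendsto_intros) (simp add: isCont_def)
      have "isCont (\<lambda>t. poly q (u + t^2)) 0" by (intro continuous_intros)
      then have l2: "((\<lambda>t. poly q (u + t^2)) \<longlongrightarrow> poly q u) (at 0)"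
        by (simp add: isCont_def)
      have ev: "eventually (\<lambda>t. poly q (u + t^2) = W t ^ 2) (at 0)"
        unfolding eventually_at using e Wsq by (intro exI[of _ e]) (auto simp: dist_commute)
      have "((\<lambda>t. W t ^ 2) \<longlongrightarrow> poly q u) (at 0)" using tendsto_cong[OF ev] l2 by simp
      then have "W 0 ^ 2 = poly q u" using l1 tendsto_unique[OF at_neq_bot] by blast
      then show ?thesis using qu by auto
    qed
    define num where "num = (\<lambda>t. W t - t * poly bq (u + t^2))"
    define den where "den = (\<lambda>t. poly R (u + t^2))"
    have "zorder g 0 = 1 - int (2*d)"
    proof (rule zorder_quot[OF e, of num den])
      show "num holomorphic_on ball 0 e" unfolding num_def by (intro holomorphic_intros hW)
      show "den holomorphic_on ball 0 e" unfolding den_def by (intro holomorphic_intros)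
      show "num 0 \<noteq> 0" using W0 by (simp add: num_def)
      show "den 0 \<noteq> 0" using R(2) by (simp add: den_def)
    next
      fix t :: complex assume t: "t \<in> ball 0 e" "t \<noteq> 0" "den t \<noteq> 0"
      have "g t = (t * W t - t^2 * poly bq (u + t^2)) / (t^(2*d) * poly R (u + t^2))"
        using gt[OF t(1,2)] by (simp add: YW bq algebra_simps)
      also have "\<dots> = num t / den t * (t / t^(2*d))"
        using t(2) by (simp add: num_def den_def power2_eq_square field_simps)
      also have "t / t^(2*d) = t powi (1 - int (2*d))"
        using t(2) power_int_diff[of t 1 "int (2*d)"] by (simp only: power_int_of_nat power_int_1_right) simp
      finally show "g t = num t / den t * t powi (1 - int (2*d))" .
    qed
    then show ?thesis using True by (simp add: d_def)
  qed
qed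


lemma order_lin: "order u [:-c,1:] = (if u = c then 1 else (0::nat))" for u c :: complex
proof (cases "u = c")
  case True
  then show ?thesis using order_power_n_n[of c 1] by simp
next
  case False
  then show ?thesis by (simp add: order_0I)
qed

lemma lin_eval: "poly [:-c,1:] x = x - c" for c x :: complex
  by simp

lemma order_mult2: "p \<noteq> 0 \<Longrightarrow> q \<noteq> 0 \<Longrightarrow> order u (p * q) = order u p + order u q"
  for p q :: "complex poly" by (simp add: order_mult)

lemma lin_nz: "[:-c,1:] \<noteq> (0::complex poly)" by simp

lemma core:
  fixes p bp :: "complex poly"
  assumes p: "p = [:a5, a4, a3, a2, a1, a0:]" and a0: "a0 \<noteq> 0" and r: "rsquarefree p"
    and bp: "bp = [:b3, b2, b1, b0:]" and b0: "b0 \<noteq> 0"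
    and H: "bp^2 - p = smult (b0^2) ([:-x1,1:] * [:-x2,1:] * [:-x3,1:] * [:-x4,1:] * ([:-x5,1:] * [:-x6,1:]))"
    and dist: "distinct [x1, x2, x3, x4]"
  shows "lin_equiv p
     (\<lambda>R. two_pt_div (Fin x1 (poly bp x1)) (Fin x2 (poly bp x2)) R + two_pt_div (Fin x3 (poly bp x3)) (Fin x4 (poly bp x4)) R)
     (two_pt_div (Fin x5 (- poly bp x5)) (Fin x6 (- poly bp x6)))"
proof -
  define A where "A = [:-x5,1:] * [:-x6,1:]"
  define E where "E = [:-x1,1:] * [:-x2,1:] * [:-x3,1:] * [:-x4,1:] * A"
  define F where "F = (-bp, A, 1::complex poly, A)"
  have A0: "A \<noteq> 0" by (simp add: A_def)
  have E0: "E \<noteq> 0" by (simp add: E_def A_def)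
  have c0: "b0^2 \<noteq> 0" using b0 by simp
  have Hp: "poly bp x ^2 - poly p x = b0^2 * poly E x" for x
  proof -
    have "poly (bp^2 - p) x = poly (smult (b0^2) E) x" using H by (simp only: E_def A_def)
    then show ?thesis by (simp only: poly_diff poly_power poly_smult)
  qed
  have onE: "poly bp x ^2 = poly p x" if "poly E x = 0" for x using Hp[of x] that by simp
  have on: "poly bp x1 ^2 = poly p x1" "poly bp x2 ^2 = poly p x2" "poly bp x3 ^2 = poly p x3"
    "poly bp x4 ^2 = poly p x4" "poly bp x5 ^2 = poly p x5" "poly bp x6 ^2 = poly p x6"
    by (auto intro!: onE simp only: E_def A_def poly_mult lin_eval) simp_all
  have ordA: "order u A = (if u = x5 then 1 else 0) + (if u = x6 then 1 else 0)" for u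
    unfolding A_def by (subst order_mult) (simp_all add: order_lin)
  have ordE: "order u E = (if u = x1 then 1 else 0) + (if u = x2 then 1 else 0) + (if u = x3 then 1 else 0)
     + (if u = x4 then 1 else 0) + order u A" for u
    unfolding E_def using A0 by (simp only: order_mult2 mult_eq_0_iff lin_nz A0 simp_thms order_lin)
  have valid: "ff_valid F" using A0 by (simp add: F_def ff_valid_def)
  have "\<forall>P. (two_pt_div (Fin x1 (poly bp x1)) (Fin x2 (poly bp x2)) P + two_pt_div (Fin x3 (poly bp x3)) (Fin x4 (poly bp x4)) P)
     - two_pt_div (Fin x5 (- poly bp x5)) (Fin x6 (- poly bp x6)) P = ff_div p F P"
  proof
    fix P show "(two_pt_div (Fin x1 (poly bp x1)) (Fin x2 (poly bp x2)) P + two_pt_div (Fin x3 (poly bp x3)) (Fin x4 (poly bp x4)) P)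
     - two_pt_div (Fin x5 (- poly bp x5)) (Fin x6 (- poly bp x6)) P = ff_div p F P"
    proof (cases P)
      case Inf
      have "A = [:x5 * x6, - x5 - x6, 1:]" by (simp add: A_def)
      from ord_inf[OF p a0 bp b0 this] show ?thesis
        by (simp add: Inf ff_div_def on_curve_def F_def two_pt_div_def pt_div_def)
    next
      case (Fin u v)
      define c1 where "c1 = (u = x1 \<and> v = poly bp x1)"
      define c2 where "c2 = (u = x2 \<and> v = poly bp x2)"
      define c3 where "c3 = (u = x3 \<and> v = poly bp x3)"
      define c4 where "c4 = (u = x4 \<and> v = poly bp x4)"
      define c5 where "c5 = (u = x5 \<and> v = - poly bp x5)"
      define c6 where "c6 = (u = x6 \<and> v = - poly bp x6)"
      define ind where "ind = (\<lambda>b. if b then 1 else (0::int))"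
      have indF: "ind False = 0" by (simp add: ind_def)
      have D: "(two_pt_div (Fin x1 (poly bp x1)) (Fin x2 (poly bp x2)) P + two_pt_div (Fin x3 (poly bp x3)) (Fin x4 (poly bp x4)) P)
         - two_pt_div (Fin x5 (- poly bp x5)) (Fin x6 (- poly bp x6)) P
         = ind c1 + ind c2 + ind c3 + ind c4 - ind c5 - ind c6"
        by (simp add: Fin two_pt_div_def pt_div_def c1_def c2_def c3_def c4_def c5_def c6_def ind_def)
      have oA: "int (order u A) = ind (u = x5) + ind (u = x6)" by (simp add: ordA ind_def)
      have oE: "int (order u E) = ind (u = x1) + ind (u = x2) + ind (u = x3) + ind (u = x4) + int (order u A)"
        by (simp add: ordE ind_def)
      show ?thesis
      proof (cases "on_curve p P")
        case False
        then have nv: "v^2 \<noteq> poly p u" by (simp add: Fin on_curve_def)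
        have "\<not> c1" "\<not> c2" "\<not> c3" "\<not> c4" "\<not> c5" "\<not> c6"
          using nv on unfolding c1_def c2_def c3_def c4_def c5_def c6_def by auto
        then show ?thesis unfolding D using False by (simp add: ff_div_def indF)
      next
        case True
        then have vu: "v^2 = poly p u" by (simp add: Fin on_curve_def)
        show ?thesis
        proof (cases "v = 0")
          case False
          have ff: "ff_div p F P = (if v = poly bp u then int (order u E) - int (order u A) else - int (order u A))"
            using ord_nb[OF False vu A0 E0 c0 Hp] True by (simp add: ff_div_def F_def Fin)
          have pm: "x5 = u \<Longrightarrow> v = poly bp u \<or> v = - poly bp u" "x6 = u \<Longrightarrow> v = poly bp u \<or> v = - poly bp u"
            using on(5,6) vu power2_eq_iff[of v "poly bp u"] by auto
          show ?thesis
          proof (cases "v = poly bp u")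
            case vb: True
            have "c1 = (u = x1)" "c2 = (u = x2)" "c3 = (u = x3)" "c4 = (u = x4)" "\<not> c5" "\<not> c6"
              using vb False unfolding c1_def c2_def c3_def c4_def c5_def c6_def by auto
            then show ?thesis unfolding D ff oE using vb by (simp add: indF)
          next
            case vb: False
            have "\<not> c1" "\<not> c2" "\<not> c3" "\<not> c4" "c5 = (u = x5)" "c6 = (u = x6)"
              using vb pm unfolding c1_def c2_def c3_def c4_def c5_def c6_def by auto
            then show ?thesis unfolding D ff oA using vb by (simp add: indF)
          qed
        next
          case v0: True
          have pu: "poly p u = 0" using vu v0 by simp
          have fd: "ff_div p F P = (if poly bp u = 0 then 1 - 2 * int (order u A) else - 2 * int (order u A))"
            using ord_br[OF r pu A0] True by (simp add: ff_div_def F_def Fin v0)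
          show ?thesis
          proof (cases "poly bp u = 0")
            case b0u: True
            then obtain bq where bq: "bp = [:-u,1:] * bq" by (metis dvdE poly_eq_0_iff_dvd)
            have p0: "p \<noteq> 0" using r by (simp add: rsquarefree_def)
            have "order u p = 1" using rsquarefree_root_order[OF r pu p0] .
            with order_decomp[OF p0, of u] obtain q where q: "p = [:-u,1:] * q" "\<not> [:-u,1:] dvd q" by auto
            have qu: "poly q u \<noteq> 0" using q(2) by (simp add: poly_eq_0_iff_dvd)
            have "smult (b0^2) E = [:-u,1:] * ([:-u,1:] * bq^2 - q)"
              using H unfolding E_def A_def[symmetric] bq q(1) by (simp add: algebra_simps power2_eq_square)
            moreover have "order u ([:-u,1:] * ([:-u,1:] * bq^2 - q)) = 1"
            proof -
              have z: "poly ([:-u,1:] * bq^2 - q) u \<noteq> 0" using qu by simp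
              then have "[:-u,1:] * bq^2 - q \<noteq> 0" by auto
              then have "order u ([:-u,1:] * ([:-u,1:] * bq^2 - q)) = order u [:-u,1:] + order u ([:-u,1:] * bq^2 - q)"
                by (intro order_mult2 lin_nz)
              also have "\<dots> = 1" using z by (simp add: order_lin order_0I)
              finally show ?thesis .
            qed
            ultimately have "order u (smult (b0^2) E) = 1" by simp
            then have "order u E = 1" using c0 by (simp add: order_smult)
            then have one: "ind (u = x1) + ind (u = x2) + ind (u = x3) + ind (u = x4) + ind (u = x5) + ind (u = x6) = 1"
              using oE oA by simp
            have "c1 = (u = x1)" "c2 = (u = x2)" "c3 = (u = x3)" "c4 = (u = x4)" "c5 = (u = x5)" "c6 = (u = x6)"
              using b0u v0 unfolding c1_def c2_def c3_def c4_def c5_def c6_def by auto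
            then show ?thesis unfolding D fd oA using b0u one by simp
          next
            case b0u: False
            have "x5 \<noteq> u" "x6 \<noteq> u" using on(5,6) pu b0u by auto
            then have "int (order u A) = 0" unfolding oA by (simp add: ind_def)
            moreover have "\<not> c1" "\<not> c2" "\<not> c3" "\<not> c4" "\<not> c5" "\<not> c6"
              using b0u v0 unfolding c1_def c2_def c3_def c4_def c5_def c6_def by auto
            ultimately show ?thesis unfolding D fd using b0u by (simp add: indF)
          qed
        qed
      qed
    qed
  qed
  then show ?thesis unfolding lin_equiv_def using valid by blast
qed

lemma poly6_zero:
  fixes Z :: "complex poly"
  assumes deg: "degree Z \<le> 6" and c0: "coeff Z 0 = 0" and c5: "coeff Z 5 = 0" and c6: "coeff Z 6 = 0"
    and dist: "distinct [x1, x2, x3, x4]" and nz: "x1 \<noteq> 0" "x2 \<noteq> 0" "x3 \<noteq> 0" "x4 \<noteq> 0"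
    and z: "poly Z x1 = 0" "poly Z x2 = 0" "poly Z x3 = 0" "poly Z x4 = 0"
  shows "Z = 0"
proof -
  obtain a Q where aQ: "Z = pCons a Q" by (cases Z) auto
  have a0: "a = 0" using c0 by (simp add: aQ)
  have "coeff Q i = 0" if "i > 3" for i
  proof -
    have "coeff Q i = coeff Z (Suc i)" by (simp add: aQ)
    moreover have "coeff Z (Suc i) = 0"
    proof (cases "Suc i > 6")
      case True then show ?thesis using deg by (simp add: coeff_eq_0)
    next
      case False
      then have "Suc i = 5 \<or> Suc i = 6" using that by auto
      then show ?thesis using c5 c6 by auto
    qed
    ultimately show ?thesis by simp
  qed
  then have dQ: "degree Q \<le> 3" by (intro degree_le) auto
  have pQ: "poly Q x = 0" if "poly Z x = 0" "x \<noteq> 0" for x using that by (simp add: aQ a0)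
  have "Q = 0"
  proof (rule poly_eqI_degree[of "{x1, x2, x3, x4}"])
    show "\<And>x. x \<in> {x1, x2, x3, x4} \<Longrightarrow> poly Q x = poly 0 x" using pQ z nz by auto
    have "card {x1, x2, x3, x4} = 4" using dist by simp
    then show "degree Q < card {x1, x2, x3, x4}" "degree (0::complex poly) < card {x1, x2, x3, x4}" using dQ by auto
  qed
  then show ?thesis by (simp add: aQ a0)
qed

lemma bg_identity:
  fixes b0 b1 b2 b3 \<alpha>3 \<beta>3 x :: complex
  defines "\<gamma>3 \<equiv> - b2 + b1 * \<alpha>3 - b0 * \<alpha>3^2 + b0 * \<beta>3"
  defines "\<delta>3 \<equiv> - b0 * \<alpha>3 * \<beta>3 + b1 * \<beta>3 - b3"
  assumes "x^2 + \<alpha>3 * x + \<beta>3 = 0"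
  shows "\<gamma>3 * x + \<delta>3 = - (b0*x^3 + b1*x^2 + b2*x + b3)"
proof -
  have "b0*x^3 + b1*x^2 + b2*x + b3 + (\<gamma>3 * x + \<delta>3) = (b0 * x + (b1 - b0 * \<alpha>3)) * (x^2 + \<alpha>3 * x + \<beta>3)"
    unfolding \<gamma>3_def \<delta>3_def by (simp add: algebra_simps power2_eq_square power3_eq_cube)
  then have "b0*x^3 + b1*x^2 + b2*x + b3 + (\<gamma>3 * x + \<delta>3) = 0" using assms(3) by simp
  then show ?thesis by (metis add.commute eq_neg_iff_add_eq_0)
qed


lemma gen_div:
  fixes N n0 n1 n2 X Y g :: complex
  assumes "N \<noteq> 0" "n0 * X - n1 * Y + n2 = g * N"
  shows "n0 / N * X - n1 / N * Y + n2 / N = g"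
proof -
  have "n0 / N * X - n1 / N * Y + n2 / N = (n0 * X - n1 * Y + n2) / N" using assms(1) by (simp add: field_simps)
  then show ?thesis using assms by simp
qed

lemma interp_red:
  fixes x \<alpha> \<beta> g d b0 b1 b2 b3 :: complex
  assumes "x^2 + \<alpha> * x + \<beta> = 0" "b0 * (\<alpha>^2 - \<beta>) - b1 * \<alpha> + b2 = g" "b0 * (\<alpha> * \<beta>) - b1 * \<beta> + b3 = d"
  shows "b0*x^3 + b1*x^2 + b2*x + b3 = g*x + d"
proof -
  have "b0*x^3 + b1*x^2 + b2*x + b3 - (g*x + d) = (b0 * x + b1 - b0 * \<alpha>) * (x^2 + \<alpha> * x + \<beta>)
     + (b0 * (\<alpha>^2 - \<beta>) - b1 * \<alpha> + b2 - g) * x + (b0 * (\<alpha> * \<beta>) - b1 * \<beta> + b3 - d)"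
    by (simp add: algebra_simps power2_eq_square power3_eq_cube)
  then show ?thesis using assms by simp
qed

lemma quad_eval: "poly [:\<beta>, \<alpha>, 1:] x = x^2 + \<alpha> * x + \<beta>" for x \<alpha> \<beta> :: complex
  by (simp add: algebra_simps power2_eq_square)

theorem mainTheorem4:
  fixes a0 a1 a2 a3 a4 a5 :: complex
    and x1 y1 x2 y2 x3 y3 x4 y4 :: complex
    and \<alpha>1 \<beta>1 \<gamma>1 \<delta>1 \<alpha>2 \<beta>2 \<gamma>2 \<delta>2 :: complex
    and x5 x6 :: complex
  defines "p \<equiv> [:a5, a4, a3, a2, a1, a0:]"
  defines "N \<equiv> (\<beta>1 - \<beta>2)^2 + (\<alpha>1 - \<alpha>2) * (\<alpha>1 * \<beta>2 - \<alpha>2 * \<beta>1)"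
  defines "b0 \<equiv> ((\<beta>2 - \<beta>1) * (\<gamma>1 - \<gamma>2) + (\<alpha>1 - \<alpha>2) * (\<delta>1 - \<delta>2)) / N"
  defines "b1 \<equiv> ((\<alpha>2 * \<beta>2 - \<alpha>1 * \<beta>1) * (\<gamma>1 - \<gamma>2)
                 + (\<alpha>1^2 - \<alpha>2^2 - \<beta>1 + \<beta>2) * (\<delta>1 - \<delta>2)) / N"
  defines "b2 \<equiv> (\<alpha>2^2 * \<beta>1 * \<gamma>1 + \<alpha>1^2 * \<beta>2 * \<gamma>2 - \<alpha>1 * \<alpha>2 * (\<beta>1 * \<gamma>1 + \<beta>2 * \<gamma>2)
                 + (\<beta>1 - \<beta>2) * (\<beta>1 * \<gamma>2 - \<beta>2 * \<gamma>1)
                 + (\<alpha>1 * \<alpha>2 * (\<alpha>1 - \<alpha>2) + (\<alpha>1 * \<beta>2 - \<alpha>2 * \<beta>1)) * (\<delta>1 - \<delta>2)) / N"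
  defines "b3 \<equiv> ((\<alpha>2 - \<alpha>1) * \<beta>1 * \<beta>2 * (\<gamma>1 - \<gamma>2) + \<alpha>1^2 * \<beta>2 * \<delta>1 + \<alpha>2^2 * \<beta>1 * \<delta>2
                 - \<alpha>1 * \<alpha>2 * (\<beta>2 * \<delta>1 + \<beta>1 * \<delta>2)
                 + (\<beta>1 - \<beta>2) * (\<beta>1 * \<delta>2 - \<beta>2 * \<delta>1)) / N"
  defines "\<alpha>3 \<equiv> - \<alpha>1 - \<alpha>2 - (a0 - 2 * b0 * b1) / b0^2"
  defines "\<beta>3 \<equiv> (b3^2 - a5) / (b0^2 * \<beta>1 * \<beta>2)"
  defines "\<gamma>3 \<equiv> - b2 + b1 * \<alpha>3 - b0 * \<alpha>3^2 + b0 * \<beta>3"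
  defines "\<delta>3 \<equiv> - b0 * \<alpha>3 * \<beta>3 + b1 * \<beta>3 - b3"
  assumes a0_nz: "a0 \<noteq> 0"
    and sqfree: "rsquarefree p"
    and P1: "y1^2 = poly p x1" and P2: "y2^2 = poly p x2"
    and Q1: "y3^2 = poly p x3" and Q2: "y4^2 = poly p x4"
    and distinct: "distinct [x1, x2, x3, x4]"
    and A1: "\<forall>x. x^2 + \<alpha>1 * x + \<beta>1 = (x - x1) * (x - x2)"
    and B1: "\<gamma>1 * x1 + \<delta>1 = y1" "\<gamma>1 * x2 + \<delta>1 = y2"
    and A2: "\<forall>x. x^2 + \<alpha>2 * x + \<beta>2 = (x - x3) * (x - x4)"
    and B2: "\<gamma>2 * x3 + \<delta>2 = y3" "\<gamma>2 * x4 + \<delta>2 = y4"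
    and nz: "N * b0 * \<beta>1 * \<beta>2 \<noteq> 0"
    and A3: "\<forall>x. x^2 + \<alpha>3 * x + \<beta>3 = (x - x5) * (x - x6)"
  shows "on_curve p (Fin x5 (\<gamma>3 * x5 + \<delta>3))
       \<and> on_curve p (Fin x6 (\<gamma>3 * x6 + \<delta>3))
       \<and> lin_equiv p
           (\<lambda>R. two_pt_div (Fin x1 y1) (Fin x2 y2) R + two_pt_div (Fin x3 y3) (Fin x4 y4) R)
           (two_pt_div (Fin x5 (\<gamma>3 * x5 + \<delta>3)) (Fin x6 (\<gamma>3 * x6 + \<delta>3)))"
  proof -
  have e1: "\<beta>1 = x1 * x2" using A1[rule_format, of 0] by simp
  have e1': "\<alpha>1 = -(x1 + x2)"
  proof -
    have "\<alpha>1 + (x1 + x2) = 0" using A1[rule_format, of 1] e1 by (simp add: algebra_simps)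
    then show ?thesis by (rule eq_neg_iff_add_eq_0[THEN iffD2])
  qed
  have e2: "\<beta>2 = x3 * x4" using A2[rule_format, of 0] by simp
  have e2': "\<alpha>2 = -(x3 + x4)"
  proof -
    have "\<alpha>2 + (x3 + x4) = 0" using A2[rule_format, of 1] e2 by (simp add: algebra_simps)
    then show ?thesis by (rule eq_neg_iff_add_eq_0[THEN iffD2])
  qed
  have e3: "\<beta>3 = x5 * x6" using A3[rule_format, of 0] by simp
  have e3': "\<alpha>3 = -(x5 + x6)"
  proof -
    have "\<alpha>3 + (x5 + x6) = 0" using A3[rule_format, of 1] e3 by (simp add: algebra_simps)
    then show ?thesis by (rule eq_neg_iff_add_eq_0[THEN iffD2])
  qed
  have N0: "N \<noteq> 0" and b00: "b0 \<noteq> 0" and be1: "\<beta>1 \<noteq> 0" and be2: "\<beta>2 \<noteq> 0" using nz by auto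
  have xnz: "x1 \<noteq> 0" "x2 \<noteq> 0" "x3 \<noteq> 0" "x4 \<noteq> 0" using be1 be2 e1 e2 by auto
  have C11: "b0 * (\<alpha>1^2 - \<beta>1) - b1 * \<alpha>1 + b2 = \<gamma>1"
    unfolding b0_def b1_def b2_def by (rule gen_div[OF N0]) (simp add: N_def algebra_simps power2_eq_square)
  have C10: "b0 * (\<alpha>1 * \<beta>1) - b1 * \<beta>1 + b3 = \<delta>1"
    unfolding b0_def b1_def b3_def by (rule gen_div[OF N0]) (simp add: N_def algebra_simps power2_eq_square)
  have C21: "b0 * (\<alpha>2^2 - \<beta>2) - b1 * \<alpha>2 + b2 = \<gamma>2"
    unfolding b0_def b1_def b2_def by (rule gen_div[OF N0]) (simp add: N_def algebra_simps power2_eq_square)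
  have C20: "b0 * (\<alpha>2 * \<beta>2) - b1 * \<beta>2 + b3 = \<delta>2"
    unfolding b0_def b1_def b3_def by (rule gen_div[OF N0]) (simp add: N_def algebra_simps power2_eq_square)
  have r1: "x1^2 + \<alpha>1 * x1 + \<beta>1 = 0" using A1[rule_format, of x1] by simp
  have r2: "x2^2 + \<alpha>1 * x2 + \<beta>1 = 0" using A1[rule_format, of x2] by simp
  have r3: "x3^2 + \<alpha>2 * x3 + \<beta>2 = 0" using A2[rule_format, of x3] by simp
  have r4: "x4^2 + \<alpha>2 * x4 + \<beta>2 = 0" using A2[rule_format, of x4] by simp
  have r5: "x5^2 + \<alpha>3 * x5 + \<beta>3 = 0" using A3[rule_format, of x5] by simp
  have r6: "x6^2 + \<alpha>3 * x6 + \<beta>3 = 0" using A3[rule_format, of x6] by simp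
  define bp where "bp = [:b3, b2, b1, b0:]"
  have pb: "poly bp x = b0*x^3 + b1*x^2 + b2*x + b3" for x
    by (simp add: bp_def algebra_simps power2_eq_square power3_eq_cube)
  have yb1: "poly bp x1 = y1" using interp_red[OF r1 C11 C10] B1(1) pb by simp
  have yb2: "poly bp x2 = y2" using interp_red[OF r2 C11 C10] B1(2) pb by simp
  have yb3: "poly bp x3 = y3" using interp_red[OF r3 C21 C20] B2(1) pb by simp
  have yb4: "poly bp x4 = y4" using interp_red[OF r4 C21 C20] B2(2) pb by simp
  have pe: "p = [:a5, a4, a3, a2, a1, a0:]" by (simp add: p_def)
  have al3: "b0^2 * (\<alpha>1 + \<alpha>2 + \<alpha>3) = 2 * b0 * b1 - a0"
    unfolding \<alpha>3_def using b00 by (simp add: field_simps power2_eq_square)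
  have be3: "b0^2 * \<beta>1 * \<beta>2 * \<beta>3 = b3^2 - a5"
    unfolding \<beta>3_def using b00 be1 be2 by (simp add: field_simps)
  define Z where "Z = bp^2 - p - smult (b0^2) ([:\<beta>1, \<alpha>1, 1:] * [:\<beta>2, \<alpha>2, 1:] * [:\<beta>3, \<alpha>3, 1:])"
  have pZ: "poly Z x = (poly bp x)^2 - poly p x - b0^2 * ((x^2 + \<alpha>1 * x + \<beta>1) * (x^2 + \<alpha>2 * x + \<beta>2) * (x^2 + \<alpha>3 * x + \<beta>3))" for x
    unfolding Z_def by (simp only: poly_diff poly_power poly_smult poly_mult quad_eval)
  have "Z = 0"
  proof (rule poly6_zero[of Z x1 x2 x3 x4])
    show "degree Z \<le> 6" unfolding Z_def bp_def pe by (simp add: power2_eq_square algebra_simps)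
    show "coeff Z 0 = 0" unfolding Z_def bp_def pe using be3 by (simp add: power2_eq_square algebra_simps)
    show "coeff Z 5 = 0" unfolding Z_def bp_def pe using al3 by (simp add: power2_eq_square algebra_simps numeral_eq_Suc)
    show "coeff Z 6 = 0" unfolding Z_def bp_def pe by (simp add: power2_eq_square algebra_simps numeral_eq_Suc)
    show "poly Z x1 = 0" unfolding pZ r1 yb1 P1 by simp
    show "poly Z x2 = 0" unfolding pZ r2 yb2 P2 by simp
    show "poly Z x3 = 0" unfolding pZ r3 yb3 Q1 by simp
    show "poly Z x4 = 0" unfolding pZ r4 yb4 Q2 by simp
  qed (use distinct xnz in auto)
  have q1: "[:\<beta>1, \<alpha>1, 1:] = [:-x1,1:] * [:-x2,1:]" by (simp add: e1 e1')
  have q2: "[:\<beta>2, \<alpha>2, 1:] = [:-x3,1:] * [:-x4,1:]" by (simp add: e2 e2')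
  have q3: "[:\<beta>3, \<alpha>3, 1:] = [:-x5,1:] * [:-x6,1:]" by (simp add: e3 e3')
  have H0: "bp^2 - p = smult (b0^2) ([:\<beta>1, \<alpha>1, 1:] * [:\<beta>2, \<alpha>2, 1:] * [:\<beta>3, \<alpha>3, 1:])"
    using \<open>Z = 0\<close> unfolding Z_def by (simp only: right_minus_eq)
  have H: "bp^2 - p = smult (b0^2) ([:-x1,1:] * [:-x2,1:] * [:-x3,1:] * [:-x4,1:] * ([:-x5,1:] * [:-x6,1:]))"
    using H0 unfolding q1 q2 q3 by (simp only: mult.assoc)
  have onH: "(poly bp x)^2 = poly p x" if "x = x5 \<or> x = x6" for x
  proof -
    have "poly (bp^2 - p) x = 0" unfolding H using that by (simp only: poly_smult poly_mult lin_eval) auto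
    then show ?thesis by (simp only: poly_diff poly_power) simp
  qed
  have g5: "\<gamma>3 * x5 + \<delta>3 = - poly bp x5"
    unfolding pb \<gamma>3_def \<delta>3_def by (rule bg_identity[OF r5])
  have g6: "\<gamma>3 * x6 + \<delta>3 = - poly bp x6"
    unfolding pb \<gamma>3_def \<delta>3_def by (rule bg_identity[OF r6])
  have LE: "lin_equiv p
     (\<lambda>R. two_pt_div (Fin x1 (poly bp x1)) (Fin x2 (poly bp x2)) R + two_pt_div (Fin x3 (poly bp x3)) (Fin x4 (poly bp x4)) R)
     (two_pt_div (Fin x5 (- poly bp x5)) (Fin x6 (- poly bp x6)))"
    by (rule core[OF pe a0_nz sqfree bp_def b00 H distinct])
  show ?thesis
    using LE onH[of x5] onH[of x6] unfolding g5 g6 yb1 yb2 yb3 yb4 by (simp add: on_curve_def)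
qed

end
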